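(* For the Markov Transition Model $M$, aggregation scheme $\Phi$, policies $\pi_e,\pi_b$ and offline distribution $\mu_h=d_h^{\pi_b}(\cdot;M)$ of the Example below (with $H\ge2$): (i) $\max_{\pi}\max_{h\in[H]}\max_{x\in\mathcal{X}_h,a\in\mathcal{A}}\frac{d_h^\pi(x,a;M)}{d_h^{\pi_b}(x,a;M)}\le 8H^3$, where the outer maximum ranges over all (non-stationary Markov) policies $\pi$; in particular the standard concentrability coefficient of $\pi_e$ is at most $8H^3$; (ii) for every $\epsilon\le 1/15$, the aggregated concentrability coefficient satisfies $\bar{\mathsf{C}}_\epsilon(M,\Phi,\mu)\ge 2^{H-7}$.
   Context: Example: $H\ge2$; for each $h\in[H]$, $\mathcal{X}_h=\{x_h^{(1)},x_h^{(2)},x_h^{(3)}\}$; $\mathcal{A}=\{a_1,a_2\}$; initial distribution $\rho(x_1^{(1)})=\frac{H-1}{2H}$, $\rho(x_1^{(2)})=\frac{1}{2H}$, $\rho(x_1^{(3)})=\frac12$. For $h\in[H-1]$: under $a_1$, $x_h^{(1)}\to x_{h+1}^{(2)}$, $x_h^{(2)}\to x_{h+1}^{(3)}$, $x_h^{(3)}\to x_{h+1}^{(3)}$ deterministically; under $a_2$, $x_h^{(1)}\to x_{h+1}^{(1)}$ or $x_{h+1}^{(3)}$ each w.p. $1/2$, $x_h^{(2)}\to x_{h+1}^{(2)}$ or $x_{h+1}^{(3)}$ each w.p. $1/2$, $x_h^{(3)}\to x_{h+1}^{(3)}$ w.p. 1. Evaluation policy $\pi_e(x)=a_1$ for all $x$;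 offline policy $\pi_b(a_1|x)=1/H^2$, $\pi_b(a_2|x)=(H^2-1)/H^2$ for all $x$; offline distribution $\mu_h=d_h^{\pi_b}(\cdot;M)$ for all $h\in[H]$. Aggregation: $\Phi_h=\{\phi_h^{(1)},\phi_h^{(2)}\}$ with $\phi_h^{(1)}=\{x_h^{(1)},x_h^{(2)}\}$, $\phi_h^{(2)}=\{x_h^{(3)}\}$. Occupancy: $d_h^\pi(x;M)=\Pr(x_h=x)$ under $x_1\sim\rho$, $a_h\sim\pi(\cdot|x_h)$, $x_{h+1}\sim T(\cdot|x_h,a_h)$; $d_h^\pi(x,a)=d_h^\pi(x)\pi(a|x)$. Aggregated transitions, for $\phi\in\Phi_h,\phi'\in\Phi_{h+1}$: $\bar T(\phi'|\phi,\pi)=\frac{\sum_{x\in\phi}\sum_{x'\in\phi'}\sum_a\pi(a|x)\mu_h(x,a)T(x'|x,a)}{\sum_{x\in\phi}\sum_a\pi(a|x)\mu_h(x,a)}$. Aggregated occupancy $\bar d_h^\pi(\phi)$: law of $\phi_h$ under $\phi_1\sim\bar\rho$, $\phi_{i+1}\sim\bar T(\cdot|\phi_i,\pi)$, $\bar\rho(\phi)=\sum_{x\in\phi}\rho(x)$. Aggregated concentrability: $\bar{\mathsf{C}}_\epsilon(M,\Phi,\mu)=\max_h\max\{\frac{\sum_{\phi\in\mathcal{I}}\bar d_h^{\pi_e}(\phi)}{\sum_{\phi\in\mathcal{I}}\sum_{x\in\phi}\mu_h(x,\pi_e(x))}:\mathcal{I}\subseteq\Phi_h,\ \sum_{\phi\in\mathcal{I}}\bar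 d_h^{\pi_e}(\phi)\ge\epsilon\}$. *)

theory Defs
  imports "HOL-Analysis.Analysis"
begin

text \<open>For each layer h the states x_h^(1), x_h^(2), x_h^(3) are encoded
  by the naturals 1, 2, 3 (the layer is tracked by the index h of the occupancy);
  the actions a_1, a_2 are encoded by 1, 2.
  A (non-stationary Markov) policy is a function pi h x a = pi_h(a|x).\<close>

definition ex_states :: "nat set" where "ex_states = {1, 2, 3}"
definition ex_actions :: "nat set" where "ex_actions = {1, 2}"

definition ex_rho :: "nat \<Rightarrow> nat \<Rightarrow> real" where
  "ex_rho H x = (if x = 1 then (real H - 1) / (2 * real H)
                 else if x = 2 then 1 / (2 * real H)
                 else if x = 3 then 1 / 2 else 0)"

text \<open>ex_T x a x' = T(x_{h+1}^{(x')} | x_h^{(x)}, a), the same for every h in [H-1].\<close>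
definition ex_T :: "nat \<Rightarrow> nat \<Rightarrow> nat \<Rightarrow> real" where
  "ex_T x a x' =
     (if a = 1 then
        (if (x = 1 \<and> x' = 2) \<or> (x = 2 \<and> x' = 3) \<or> (x = 3 \<and> x' = 3) then 1 else 0)
      else if a = 2 then
        (if x = 1 \<and> (x' = 1 \<or> x' = 3) then 1 / 2
         else if x = 2 \<and> (x' = 2 \<or> x' = 3) then 1 / 2
         else if x = 3 \<and> x' = 3 then 1 else 0)
      else 0)"

definition is_policy :: "(nat \<Rightarrow> nat \<Rightarrow> nat \<Rightarrow> real) \<Rightarrow> bool" where
  "is_policy \<pi> \<longleftrightarrow> (\<forall>h x a. 0 \<le> \<pi> h x a) \<and>
                      (\<forall>h x. (\<Sum>a\<in>ex_actions. \<pi> h x a) = 1) \<and>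
                      (\<forall>h x a. a \<notin> ex_actions \<longrightarrow> \<pi> h x a = 0)"

definition pi_e :: "nat \<Rightarrow> nat \<Rightarrow> nat \<Rightarrow> real" where
  "pi_e h x a = (if a = 1 then 1 else 0)"

definition pi_b :: "nat \<Rightarrow> nat \<Rightarrow> nat \<Rightarrow> nat \<Rightarrow> real" where
  "pi_b H h x a = (if a = 1 then 1 / (real H)^2
                   else if a = 2 then ((real H)^2 - 1) / (real H)^2 else 0)"

text \<open>State occupancy d_h^pi(x; M), layers h = 1, 2, ...\<close>
fun occ :: "nat \<Rightarrow> (nat \<Rightarrow> nat \<Rightarrow> nat \<Rightarrow> real) \<Rightarrow> nat \<Rightarrow> nat \<Rightarrow> real" where
  "occ H \<pi> 0 x = 0"
| "occ H \<pi> (Suc 0) x = ex_rho H x"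
| "occ H \<pi> (Suc (Suc k)) x' =
     (\<Sum>x\<in>ex_states. \<Sum>a\<in>ex_actions. occ H \<pi> (Suc k) x * \<pi> (Suc k) x a * ex_T x a x')"

definition occ_sa :: "nat \<Rightarrow> (nat \<Rightarrow> nat \<Rightarrow> nat \<Rightarrow> real) \<Rightarrow> nat \<Rightarrow> nat \<Rightarrow> nat \<Rightarrow> real" where
  "occ_sa H \<pi> h x a = occ H \<pi> h x * \<pi> h x a"

definition mu :: "nat \<Rightarrow> nat \<Rightarrow> nat \<Rightarrow> nat \<Rightarrow> real" where
  "mu H h x a = occ_sa H (pi_b H) h x a"

definition ex_Phi :: "nat set set" where "ex_Phi = {{1, 2}, {3}}"

definition Tbar :: "nat \<Rightarrow> (nat \<Rightarrow> nat \<Rightarrow> nat \<Rightarrow> real) \<Rightarrow> nat \<Rightarrow> nat set \<Rightarrow> nat set \<Rightarrow> real" where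
  "Tbar H \<pi> h \<phi>' \<phi> =
     (\<Sum>x\<in>\<phi>. \<Sum>x'\<in>\<phi>'. \<Sum>a\<in>ex_actions. \<pi> h x a * mu H h x a * ex_T x a x') /
     (\<Sum>x\<in>\<phi>. \<Sum>a\<in>ex_actions. \<pi> h x a * mu H h x a)"

definition rhobar :: "nat \<Rightarrow> nat set \<Rightarrow> real" where
  "rhobar H \<phi> = (\<Sum>x\<in>\<phi>. ex_rho H x)"

fun occbar :: "nat \<Rightarrow> (nat \<Rightarrow> nat \<Rightarrow> nat \<Rightarrow> real) \<Rightarrow> nat \<Rightarrow> nat set \<Rightarrow> real" where
  "occbar H \<pi> 0 \<phi> = 0"
| "occbar H \<pi> (Suc 0) \<phi> = rhobar H \<phi>"
| "occbar H \<pi> (Suc (Suc k)) \<phi>' =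
     (\<Sum>\<phi>\<in>ex_Phi. occbar H \<pi> (Suc k) \<phi> * Tbar H \<pi> (Suc k) \<phi>' \<phi>)"

text \<open>Aggregated concentrability coefficient bar C_eps(M, Phi, mu) for pi_e
  (pi_e(x) = a_1, encoded as action 1).\<close>
definition Cbar :: "nat \<Rightarrow> real \<Rightarrow> real" where
  "Cbar H \<epsilon> = Max {(\<Sum>\<phi>\<in>I. occbar H pi_e h \<phi>) /
                      (\<Sum>\<phi>\<in>I. \<Sum>x\<in>\<phi>. mu H h x 1) | h I.
                     h \<in> {1..H} \<and> I \<subseteq> ex_Phi \<and> (\<Sum>\<phi>\<in>I. occbar H pi_e h \<phi>) \<ge> \<epsilon>}"

end

theory Submission
  imports Defs
begin

lemma occ_s1: "occ H \<pi> (Suc (Suc k)) 1 = occ H \<pi> (Suc k) 1 * \<pi> (Suc k) 1 2 / 2"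
  by (simp add: ex_states_def ex_actions_def ex_T_def)
lemma occ_s2: "occ H \<pi> (Suc (Suc k)) 2 = occ H \<pi> (Suc k) 1 * \<pi> (Suc k) 1 1 + occ H \<pi> (Suc k) 2 * \<pi> (Suc k) 2 2 / 2"
  by (simp add: ex_states_def ex_actions_def ex_T_def)
lemma occ_s3: "occ H \<pi> (Suc (Suc k)) 3 = occ H \<pi> (Suc k) 1 * \<pi> (Suc k) 1 2 / 2 + occ H \<pi> (Suc k) 2 * \<pi> (Suc k) 2 1
   + occ H \<pi> (Suc k) 2 * \<pi> (Suc k) 2 2 / 2 + occ H \<pi> (Suc k) 3 * (\<pi> (Suc k) 3 1 + \<pi> (Suc k) 3 2)"
  by (simp add: ex_states_def ex_actions_def ex_T_def algebra_simps)

lemma pol: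
  assumes "is_policy \<pi>"
  shows "\<pi> h x 1 + \<pi> h x 2 = 1" "0 \<le> \<pi> h x a" "\<pi> h x a \<le> 1"
proof -
  have s: "(\<Sum>a\<in>ex_actions. \<pi> h x a) = 1" and n: "\<And>a. 0 \<le> \<pi> h x a"
    and z: "\<And>a. a \<notin> ex_actions \<Longrightarrow> \<pi> h x a = 0"
    using assms unfolding is_policy_def by auto
  show 1: "\<pi> h x 1 + \<pi> h x 2 = 1" using s by (simp add: ex_actions_def)
  show "0 \<le> \<pi> h x a" by (rule n)
  show "\<pi> h x a \<le> 1"
  proof (cases "a \<in> ex_actions")
    case True
    then have "a = 1 \<or> a = 2" by (simp add: ex_actions_def)
    then show ?thesis using 1 n[of 1] n[of 2] by auto
  next
    case False then show ?thesis using z by simp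
  qed
qed

lemma T_nn: "0 \<le> ex_T x a x'" by (simp add: ex_T_def)

lemma occ_nn:
  assumes "is_policy \<pi>" "H \<ge> 2"
  shows "0 \<le> occ H \<pi> (Suc k) x"
proof (induction k arbitrary: x)
  case 0 then show ?case using assms by (simp add: ex_rho_def)
next
  case (Suc k)
  show ?case unfolding occ.simps
    by (intro sum_nonneg mult_nonneg_nonneg Suc pol(2)[OF assms(1)] T_nn)
qed

lemma d1_bound:
  assumes "is_policy \<pi>" "H \<ge> 2"
  shows "occ H \<pi> (Suc k) 1 \<le> (real H - 1)/(2*real H) * (1/2)^k"
proof (induction k)
  case 0 then show ?case by (simp add: ex_rho_def)
next
  case (Suc k)
  have "occ H \<pi> (Suc k) 1 * \<pi> (Suc k) 1 2 \<le> occ H \<pi> (Suc k) 1"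
    using occ_nn[OF assms, of k 1] pol(3)[OF assms(1), of "Suc k" 1 2]
    by (simp add: mult_left_le)
  then show ?case using Suc unfolding occ_s1 by simp
qed

lemma w_bound:
  assumes "is_policy \<pi>" "H \<ge> 2"
  shows "occ H \<pi> (Suc k) 2 + 2 * occ H \<pi> (Suc k) 1 \<le> (1/2)^k"
proof (induction k)
  case 0 then show ?case using assms by (simp add: ex_rho_def field_simps)
next
  case (Suc k)
  let ?o1 = "occ H \<pi> (Suc k) 1" and ?o2 = "occ H \<pi> (Suc k) 2"
  have e: "\<pi> (Suc k) 1 1 = 1 - \<pi> (Suc k) 1 2" using pol(1)[OF assms(1), of "Suc k" 1] by simp
  have "?o2 * \<pi> (Suc k) 2 2 \<le> ?o2"
    using occ_nn[OF assms, of k 2] pol(3)[OF assms(1), of "Suc k" 2 2]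
    by (simp add: mult_left_le)
  moreover have "occ H \<pi> (Suc (Suc k)) 2 + 2 * occ H \<pi> (Suc (Suc k)) 1 = ?o1 + ?o2 * \<pi> (Suc k) 2 2 / 2"
    unfolding occ_s1 occ_s2 e by (simp add: algebra_simps)
  ultimately show ?case using Suc by simp
qed

lemma tot:
  assumes "is_policy \<pi>" "H \<ge> 2"
  shows "occ H \<pi> (Suc k) 1 + occ H \<pi> (Suc k) 2 + occ H \<pi> (Suc k) 3 = 1"
proof (induction k)
  case 0 then show ?case using assms by (simp add: ex_rho_def field_simps)
next
  case (Suc k)
  have e1: "\<pi> (Suc k) 1 1 = 1 - \<pi> (Suc k) 1 2" using pol(1)[OF assms(1), of "Suc k" 1] by simp
  have e2: "\<pi> (Suc k) 2 1 = 1 - \<pi> (Suc k) 2 2" using pol(1)[OF assms(1), of "Suc k" 2] by simp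
  have e3: "\<pi> (Suc k) 3 1 = 1 - \<pi> (Suc k) 3 2" using pol(1)[OF assms(1), of "Suc k" 3] by simp
  show ?case using Suc unfolding occ_s1 occ_s2 occ_s3 e1 e2 e3 by (simp add: algebra_simps)
qed

lemma d3_ge:
  assumes "is_policy \<pi>" "H \<ge> 2"
  shows "occ H \<pi> (Suc k) 3 \<ge> 1/2"
proof (induction k)
  case 0 then show ?case by (simp add: ex_rho_def)
next
  case (Suc k)
  have e3: "\<pi> (Suc k) 3 1 + \<pi> (Suc k) 3 2 = 1" using pol(1)[OF assms(1), of "Suc k" 3] by simp
  have "0 \<le> occ H \<pi> (Suc k) 1 * \<pi> (Suc k) 1 2 / 2 + occ H \<pi> (Suc k) 2 * \<pi> (Suc k) 2 1
   + occ H \<pi> (Suc k) 2 * \<pi> (Suc k) 2 2 / 2"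
    using occ_nn[OF assms] pol(2)[OF assms(1)] by (intro add_nonneg_nonneg divide_nonneg_nonneg mult_nonneg_nonneg) auto
  then show ?case using Suc unfolding occ_s3 e3 by simp
qed

definition qq :: "nat \<Rightarrow> real" where "qq H = ((real H)^2 - 1) / (real H)^2"

lemma H2_ge: assumes "H \<ge> 2" shows "(real H)^2 \<ge> 4"
proof -
  have "real H \<ge> 2" using assms by simp
  then have "real H * real H \<ge> 2 * 2" by (intro mult_mono) auto
  then show ?thesis by (simp add: power2_eq_square)
qed

lemma pol_b: assumes "H \<ge> 2" shows "is_policy (pi_b H)"
proof -
  have "(real H)^2 \<ge> 4" by (rule H2_ge[OF assms])
  then have p: "(real H)^2 > 0" by linarith
  then show ?thesis using \<open>(real H)^2 \<ge> 4\<close> unfolding is_policy_def pi_b_def ex_actions_def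
    by (auto simp: field_simps)
qed

lemma b1:
  assumes "H \<ge> 2"
  shows "occ H (pi_b H) (Suc k) 1 = (real H - 1)/(2*real H) * (qq H/2)^k"
proof (induction k)
  case 0 then show ?case by (simp add: ex_rho_def)
next
  case (Suc k)
  show ?case unfolding occ_s1 Suc using assms by (simp add: pi_b_def qq_def field_simps)
qed

lemma qq_pos: assumes "H \<ge> 2" shows "0 < qq H" "qq H \<le> 1"
proof -
  have a: "(real H)^2 \<ge> 4" by (rule H2_ge[OF assms])
  then have p: "(real H)^2 > 0" by linarith
  show "0 < qq H" "qq H \<le> 1" using a p by (auto simp: qq_def field_simps)
qed

lemma b2:
  assumes "H \<ge> 2"
  shows "occ H (pi_b H) (Suc k) 2 \<ge> 1/(2*real H) * (qq H/2)^k"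
proof (induction k)
  case 0 then show ?case by (simp add: ex_rho_def)
next
  case (Suc k)
  have p: "pi_b H (Suc k) 2 2 = qq H" by (simp add: pi_b_def qq_def)
  have "0 \<le> occ H (pi_b H) (Suc k) 1 * pi_b H (Suc k) 1 1"
    using occ_nn[OF pol_b[OF assms] assms] pol(2)[OF pol_b[OF assms]] by simp
  moreover have "1/(2*real H) * (qq H/2)^k * (qq H / 2) \<le> occ H (pi_b H) (Suc k) 2 * (qq H / 2)"
    using Suc qq_pos[OF assms] by (intro mult_right_mono) auto
  ultimately show ?case unfolding occ_s2 p by (simp add: field_simps)
qed

lemma qpow:
  assumes "H \<ge> 2" "k \<le> H - 1"
  shows "qq H ^ k \<ge> 3/4"
proof -
  have "qq H ^ (H-1) \<le> qq H ^ k" using qq_pos[OF assms(1)] assms(2) by (intro power_decreasing) auto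
  moreover have "1 + real (H-1) * (- 1/(real H)^2) \<le> (1 + (- 1/(real H)^2)) ^ (H-1)"
    using H2_ge[OF assms(1)] by (intro Bernoulli_inequality) (auto simp: field_simps divide_le_eq_1)
  moreover have "1 + (- 1/(real H)^2) = qq H"
  proof -
    have "(real H)^2 \<noteq> 0" using H2_ge[OF assms(1)] by linarith
    then show ?thesis by (simp add: qq_def field_simps)
  qed
  moreover have "1 + real (H-1) * (- 1/(real H)^2) \<ge> 3/4"
  proof -
    have "0 \<le> (real H - 2)^2" by simp
    then have "4 * (real H - 1) \<le> (real H)^2" by (simp add: power2_eq_square algebra_simps)
    then show ?thesis using assms(1) H2_ge[OF assms(1)] by (simp add: of_nat_diff field_simps)
  qed
  ultimately show ?thesis by (smt (verit))
qed

lemma occ_ratio: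
  assumes P: "is_policy \<pi>" and H: "H \<ge> 2" and k: "k \<le> H - 1" and x: "x \<in> ex_states"
  shows "occ H \<pi> (Suc k) x \<le> 8 * real H * occ H (pi_b H) (Suc k) x"
proof -
  define t :: real where "t = (1/2)^k"
  define A :: real where "A = (real H - 1)/(2*real H)"
  have t0: "0 < t" by (simp add: t_def)
  have A0: "0 \<le> A" using H by (simp add: A_def)
  have qk: "qq H ^ k \<ge> 3/4" by (rule qpow[OF H k])
  have sp: "(qq H/2)^k = qq H ^ k * t" by (simp add: t_def power_divide)
  have Hr: "real H \<ge> 2" using H by simp
  have nb: "0 \<le> occ H (pi_b H) (Suc k) x" by (rule occ_nn[OF pol_b[OF H] H])
  consider "x = 1" | "x = 2" | "x = 3" using x by (auto simp: ex_states_def)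
  then show ?thesis
  proof cases
    case 1
    have a: "occ H \<pi> (Suc k) 1 \<le> A * t" using d1_bound[OF P H, of k] by (simp add: A_def t_def)
    have b: "occ H (pi_b H) (Suc k) 1 = A * qq H ^ k * t" using b1[OF H, of k] sp by (simp add: A_def)
    have "A * t * (3/4) \<le> A * t * qq H ^ k" using A0 t0 qk by (intro mult_left_mono) auto
    moreover have X: "0 \<le> A * t * qq H ^ k" using A0 t0 qq_pos[OF H] by simp
    moreover have "16 * (A * t * qq H ^ k) \<le> 8 * real H * (A * t * qq H ^ k)"
      using X Hr by (intro mult_right_mono) auto
    ultimately have "A * t \<le> 8 * real H * (A * qq H ^ k * t)" by (simp add: mult_ac)
    then show ?thesis using a b 1 by simp
  next
    case 2
    have a: "occ H \<pi> (Suc k) 2 \<le> t" using w_bound[OF P H, of k] occ_nn[OF P H, of k 1] by (simp add: t_def)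
    have b: "occ H (pi_b H) (Suc k) 2 \<ge> 1/(2*real H) * qq H ^ k * t" using b2[OF H, of k] sp by simp
    have "8 * real H * (1/(2*real H) * qq H ^ k * t) = 4 * qq H ^ k * t" using Hr by (simp add: field_simps)
    also have "\<dots> \<ge> t" using qk t0 mult_right_mono[OF qk, of t] by simp
    finally have "t \<le> 8 * real H * (1/(2*real H) * qq H ^ k * t)" .
    also have "\<dots> \<le> 8 * real H * occ H (pi_b H) (Suc k) 2" using b Hr by (intro mult_left_mono) auto
    finally show ?thesis using a 2 by simp
  next
    case 3
    have a: "occ H \<pi> (Suc k) 3 \<le> 1" using tot[OF P H, of k] occ_nn[OF P H, of k 1] occ_nn[OF P H, of k 2] by simp
    have b: "occ H (pi_b H) (Suc k) 3 \<ge> 1/2" by (rule d3_ge[OF pol_b[OF H] H])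
    have "16 * occ H (pi_b H) (Suc k) 3 \<le> 8 * real H * occ H (pi_b H) (Suc k) 3"
      using Hr nb 3 by (intro mult_right_mono) auto
    then show ?thesis using a b unfolding 3 by linarith
  qed
qed

lemma div_le: "(a::real) \<le> c * b \<Longrightarrow> 0 \<le> b \<Longrightarrow> 0 \<le> c \<Longrightarrow> a / b \<le> c"
  by (cases "b = 0") (auto simp: pos_divide_le_eq)

lemma part1:
  assumes P: "is_policy \<pi>" and H: "H \<ge> 2" and h: "h \<in> {1..H}" and x: "x \<in> ex_states" and a: "a \<in> ex_actions"
  shows "occ_sa H \<pi> h x a / occ_sa H (pi_b H) h x a \<le> 8 * (real H)^3"
proof -
  obtain k where hk: "h = Suc k" and k: "k \<le> H - 1" using h by (cases h) auto
  have r: "occ H \<pi> h x \<le> 8 * real H * occ H (pi_b H) h x" using occ_ratio[OF P H k x] hk by simp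
  have n1: "0 \<le> occ H \<pi> h x" using occ_nn[OF P H] hk by simp
  have n2: "0 \<le> occ H (pi_b H) h x" using occ_nn[OF pol_b[OF H] H] hk by simp
  have H2: "(real H)^2 \<ge> 4" by (rule H2_ge[OF H])
  have pb: "(real H)^2 * pi_b H h x a \<ge> 1" "0 \<le> pi_b H h x a"
    using a H2 H by (auto simp: ex_actions_def pi_b_def)
  have "occ_sa H \<pi> h x a \<le> occ H \<pi> h x" unfolding occ_sa_def
    using n1 pol(3)[OF P, of h x a] by (simp add: mult_left_le)
  also have "\<dots> \<le> 8 * real H * occ H (pi_b H) h x" by (rule r)
  also have "\<dots> \<le> 8 * real H * (occ H (pi_b H) h x * ((real H)^2 * pi_b H h x a))"
    using pb n2 H by (intro mult_left_mono) (auto simp: mult_le_cancel_left1)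
  also have "\<dots> = 8 * (real H)^3 * occ_sa H (pi_b H) h x a" by (simp add: occ_sa_def power3_eq_cube power2_eq_square)
  finally show ?thesis
    by (rule div_le) (simp_all add: occ_sa_def n2 pb)
qed

lemma phi_ne: "{1::nat,2} \<noteq> {3}" by auto
lemma Tbar11: "Tbar H pi_e h {1,2} {1,2} = mu H h 1 1 / (mu H h 1 1 + mu H h 2 1)"
  by (simp add: Tbar_def ex_actions_def ex_T_def pi_e_def)
lemma Tbar13: "Tbar H pi_e h {1,2} {3} = 0"
  by (simp add: Tbar_def ex_actions_def ex_T_def pi_e_def)
lemma occbar_s: "occbar H pi_e (Suc (Suc k)) {1,2} = occbar H pi_e (Suc k) {1,2} * Tbar H pi_e (Suc k) {1,2} {1,2}"
  using phi_ne Tbar13[of H "Suc k"] by (simp add: ex_Phi_def)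

definition cc :: "nat \<Rightarrow> nat \<Rightarrow> real" where
  "cc H i = ((real H)^2 + real H + 2 * real i - 2) / ((real H)^2 - 1)"

lemma cc_pos: assumes "H \<ge> 2" shows "0 < cc H i"
proof -
  have "(real H)^2 \<ge> 4" by (rule H2_ge[OF assms])
  moreover have "real H \<ge> 2" using assms by simp
  ultimately show ?thesis unfolding cc_def by (intro divide_pos_pos) auto
qed

lemma b12:
  assumes H: "H \<ge> 2"
  shows "occ H (pi_b H) (Suc k) 2 = occ H (pi_b H) (Suc k) 1 * (cc H (Suc k) - 1)"
proof (induction k)
  have a: "(real H)^2 - 1 \<noteq> 0" "real H \<noteq> 0" "real H - 1 \<noteq> 0" using H2_ge[OF H] H by auto
  case 0 show ?case using a by (simp add: ex_rho_def cc_def field_simps power2_eq_square)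
next
  have a: "(real H)^2 - 1 \<noteq> 0" "real H \<noteq> 0" using H2_ge[OF H] H by auto
  case (Suc k)
  have c: "cc H (Suc (Suc k)) = cc H (Suc k) + 2 / ((real H)^2 - 1)"
    unfolding cc_def add_divide_distrib[symmetric] by (simp add: algebra_simps)
  have p1: "pi_b H (Suc k) 1 1 = 1/(real H)^2" by (simp add: pi_b_def)
  have p2: "pi_b H (Suc k) 1 2 = ((real H)^2 - 1)/(real H)^2" "pi_b H (Suc k) 2 2 = ((real H)^2 - 1)/(real H)^2"
    by (simp_all add: pi_b_def)
  have alg: "\<And>u w z::real. z \<noteq> 0 \<Longrightarrow> z - 1 \<noteq> 0 \<Longrightarrow>
     u * (1/z) + u * (w - 1) * ((z - 1)/z) / 2 = u * ((z - 1)/z) / 2 * (w + 2/(z - 1) - 1)"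
    by (simp add: field_simps)
  have "(real H)^2 \<noteq> 0" using H by simp
  then show ?case unfolding occ_s1 occ_s2 Suc c p1 p2 using a by (intro alg) auto
qed

lemma o1_pos: assumes H: "H \<ge> 2" shows "0 < occ H (pi_b H) (Suc k) 1"
  unfolding b1[OF H] using qq_pos[OF H] H by (intro mult_pos_pos divide_pos_pos) auto

lemma Tb: assumes H: "H \<ge> 2" shows "Tbar H pi_e (Suc k) {1,2} {1,2} = 1 / cc H (Suc k)"
proof -
  have m1: "mu H (Suc k) 1 1 = occ H (pi_b H) (Suc k) 1 / (real H)^2" by (simp add: mu_def occ_sa_def pi_b_def)
  have m2: "mu H (Suc k) 2 1 = occ H (pi_b H) (Suc k) 1 * (cc H (Suc k) - 1) / (real H)^2"
    by (simp add: mu_def occ_sa_def pi_b_def b12[OF H])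
  have a: "(real H)^2 \<noteq> 0" "occ H (pi_b H) (Suc k) 1 \<noteq> 0" "cc H (Suc k) \<noteq> 0"
    using H2_ge[OF H] o1_pos[OF H, of k] cc_pos[OF H, of "Suc k"] H by auto
  show ?thesis unfolding Tbar11 m1 m2 using a by (simp add: field_simps)
qed

lemma ob: assumes H: "H \<ge> 2" shows "occbar H pi_e (Suc k) {1,2} = (1/2) / (\<Prod>i\<in>{1..k}. cc H i)"
proof (induction k)
  case 0 show ?case using H by (simp add: rhobar_def ex_rho_def field_simps)
next
  case (Suc k)
  have "cc H (Suc k) \<noteq> 0" using cc_pos[OF H] by (metis less_irrefl)
  then show ?case unfolding occbar_s Suc Tb[OF H] by (simp add: prod.cl_ivl_Suc)
qed

lemma sumc: assumes H: "H \<ge> 2"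
  shows "(\<Sum>i\<in>{1..n}. cc H i - 1) = real n * (real H + real n) / ((real H)^2 - 1)"
proof (induction n)
  case 0 show ?case by simp
next
  case (Suc n)
  have D: "(real H)^2 - 1 \<noteq> 0" using H2_ge[OF H] by auto
  have "cc H (Suc n) - 1 = (real H + 2 * real (Suc n) - 1) / ((real H)^2 - 1)"
    using D unfolding cc_def by (simp add: field_simps)
  then show ?case unfolding sum.cl_ivl_Suc using Suc D
    by (simp add: add_divide_distrib[symmetric] algebra_simps)
qed

lemma prod_bound: assumes H: "H \<ge> 2" and n: "n \<le> H - 1"
  shows "(\<Prod>i\<in>{1..n}. cc H i) \<le> exp 2"
proof -
  have "(\<Prod>i\<in>{1..n}. cc H i) \<le> (\<Prod>i\<in>{1..n}. exp (cc H i - 1))"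
    using cc_pos[OF H] by (intro prod_mono) (auto simp: less_imp_le add.commute[of 1] exp_ge_add_one_self[of "cc H _ - 1", simplified])
  also have "\<dots> = exp (\<Sum>i\<in>{1..n}. cc H i - 1)" by (simp add: exp_sum)
  also have "\<dots> \<le> exp 2"
  proof -
    have nr: "real n \<le> real H - 1" using n H by (simp add: of_nat_diff)
    have "real n * (real H + real n) \<le> (real H - 1) * (2 * real H - 1)"
      using nr H by (intro mult_mono) auto
    also have "\<dots> \<le> 2 * ((real H)^2 - 1)" using H by (simp add: power2_eq_square algebra_simps)
    finally have "real n * (real H + real n) / ((real H)^2 - 1) \<le> 2"
      using H2_ge[OF H] by (simp add: pos_divide_le_eq)
    then show ?thesis unfolding sumc[OF H] by simp
  qed
  finally show ?thesis .
qed

lemma exp2: "exp (2::real) < 15/2"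
proof -
  have "exp (2::real) = exp 1 * exp 1" by (simp add: exp_add[symmetric])
  also have "\<dots> < (272/100) * (272/100)" using e_less_272 by (intro mult_strict_mono) auto
  finally show ?thesis by simp
qed

lemma part3:
  assumes H: "H \<ge> 2" and e: "\<epsilon> \<le> 1/15"
  shows "Cbar H \<epsilon> \<ge> 2 powr (real H - 7)"
proof -
  define m where "m = H - 7"
  define h where "h = Suc m"
  define Pm where "Pm = (\<Prod>i\<in>{1..m}. cc H i)"
  define Pm1 where "Pm1 = (\<Prod>i\<in>{1..Suc m}. cc H i)"
  define o1 where "o1 = occ H (pi_b H) h 1"
  have hH: "h \<in> {1..H}" using H by (auto simp: h_def m_def)
  have Pm1e: "Pm1 = Pm * cc H (Suc m)" by (simp add: Pm1_def Pm_def prod.cl_ivl_Suc)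
  have Pm_pos: "0 < Pm" unfolding Pm_def using cc_pos[OF H] by (intro prod_pos) auto
  have c_pos: "0 < cc H (Suc m)" by (rule cc_pos[OF H])
  have o1_p: "0 < o1" unfolding o1_def h_def by (rule o1_pos[OF H])
  have H2: "(real H)^2 \<ge> 4" by (rule H2_ge[OF H])
  have "m \<le> H - 1" unfolding m_def by simp
  then have Pm_b: "Pm \<le> 15/2" using prod_bound[OF H, of m] exp2 unfolding Pm_def by linarith
  have Pm1_b: "Pm1 \<le> (real H)^2"
  proof (cases "H = 2")
    case True
    then show ?thesis by (simp add: Pm1_def m_def cc_def)
  next
    case False
    then have "Suc m \<le> H - 1" using H by (simp add: m_def)
    then have "Pm1 \<le> exp 2" unfolding Pm1_def by (rule prod_bound[OF H])
    moreover have "(real H)^2 \<ge> 9"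
    proof -
      have "real H \<ge> 3" using H False by simp
      then have "real H * real H \<ge> 3 * 3" by (intro mult_mono) auto
      then show ?thesis by (simp add: power2_eq_square)
    qed
    ultimately show ?thesis using exp2 by linarith
  qed
  have ob_h: "occbar H pi_e h {1,2} = (1/2) / Pm" unfolding h_def Pm_def by (rule ob[OF H])
  have m11: "mu H h 1 1 = o1 / (real H)^2" by (simp add: mu_def occ_sa_def pi_b_def o1_def)
  have m21: "mu H h 2 1 = o1 * (cc H (Suc m) - 1) / (real H)^2"
    by (simp add: mu_def occ_sa_def pi_b_def o1_def h_def b12[OF H])
  define V where "V = (\<Sum>\<phi>\<in>{{1::nat,2}}. occbar H pi_e h \<phi>) / (\<Sum>\<phi>\<in>{{1::nat,2}}. \<Sum>x\<in>\<phi>. mu H h x 1)"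
  have sumI: "(\<Sum>\<phi>\<in>{{1::nat,2}}. occbar H pi_e h \<phi>) = occbar H pi_e h {1,2}" by simp
  have sumD: "(\<Sum>\<phi>\<in>{{1::nat,2}}. \<Sum>x\<in>\<phi>. mu H h x 1) = mu H h 1 1 + mu H h 2 1" by simp
  have Hn: "(real H)^2 \<noteq> 0" using H by simp
  have Veq: "V = (real H)^2 / (2 * o1 * Pm1)"
    unfolding V_def sumI sumD ob_h m11 m21 Pm1e using Hn o1_p Pm_pos c_pos
    by (simp add: field_simps)
  have o1_b: "2 * o1 \<le> (1/2)^m"
  proof -
    have eq: "o1 = (real H - 1)/(2*real H) * (qq H/2)^m" unfolding o1_def h_def by (rule b1[OF H])
    have a: "(real H - 1)/(2*real H) \<le> 1/2" using H by (simp add: field_simps)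
    have b: "(qq H/2)^m \<le> (1/2)^m" using qq_pos[OF H] by (intro power_mono) auto
    have d: "0 \<le> (qq H/2)^m" using qq_pos[OF H] by auto
    have "o1 \<le> 1/2 * (1/2)^m" unfolding eq by (rule mult_mono[OF a b _ d]) simp
    then show ?thesis by simp
  qed
  have Pm1_pos: "0 < Pm1" using Pm1e Pm_pos c_pos by simp
  have "(real H)^2 / ((1/2)^m * (real H)^2) \<le> (real H)^2 / (2 * o1 * Pm1)"
    using H o1_p Pm1_pos H2 o1_b Pm1_b
    by (intro divide_left_mono mult_mono) (auto intro!: mult_pos_pos)
  moreover have "(real H)^2 / ((1/2)^m * (real H)^2) = 2^m" using Hn by (simp add: power_one_over)
  moreover have "2 powr (real H - 7) \<le> 2 powr (real m)" by (intro powr_mono) (auto simp: m_def)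
  moreover have "2 powr (real m) = (2::real)^m" by (simp add: powr_realpow)
  ultimately have Vge: "2 powr (real H - 7) \<le> V" unfolding Veq by linarith
  have occ_e: "(\<Sum>\<phi>\<in>{{1::nat,2}}. occbar H pi_e h \<phi>) \<ge> \<epsilon>"
  proof -
    have "(1/2) / Pm \<ge> (1/2) / (15/2)" using Pm_pos Pm_b by (intro divide_left_mono) auto
    then show ?thesis unfolding sumI ob_h using e by simp
  qed
  define S where "S = {(\<Sum>\<phi>\<in>I. occbar H pi_e h \<phi>) / (\<Sum>\<phi>\<in>I. \<Sum>x\<in>\<phi>. mu H h x 1) | h I.
                     h \<in> {1..H} \<and> I \<subseteq> ex_Phi \<and> (\<Sum>\<phi>\<in>I. occbar H pi_e h \<phi>) \<ge> \<epsilon>}"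
  have CS: "Cbar H \<epsilon> = Max S" unfolding Cbar_def S_def by simp
  have sub: "{{1::nat,2}} \<subseteq> ex_Phi" by (simp add: ex_Phi_def)
  have VS: "V \<in> S" unfolding S_def V_def
    by (rule CollectI, rule exI[of _ h], rule exI[of _ "{{1::nat,2}}"]) (use hH occ_e sub in blast)
  have "S \<subseteq> (\<lambda>(h, I). (\<Sum>\<phi>\<in>I. occbar H pi_e h \<phi>) / (\<Sum>\<phi>\<in>I. \<Sum>x\<in>\<phi>. mu H h x 1)) ` ({1..H} \<times> Pow ex_Phi)"
    unfolding S_def by auto
  moreover have "finite ({1..H} \<times> Pow ex_Phi)" by (simp add: ex_Phi_def)
  ultimately have fS: "finite S" by (meson finite_imageI finite_subset)
  have "V \<le> Max S" by (rule Max_ge[OF fS VS])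
  then show ?thesis using Vge CS by linarith
qed

theorem mainTheorem4:
  fixes H :: nat
  assumes "H \<ge> 2"
  shows "(\<forall>\<pi>. is_policy \<pi> \<longrightarrow>
           (\<forall>h\<in>{1..H}. \<forall>x\<in>ex_states. \<forall>a\<in>ex_actions.
              occ_sa H \<pi> h x a / occ_sa H (pi_b H) h x a \<le> 8 * (real H)^3))
       \<and> (\<forall>h\<in>{1..H}. \<forall>x\<in>ex_states. \<forall>a\<in>ex_actions.
              occ_sa H pi_e h x a / occ_sa H (pi_b H) h x a \<le> 8 * (real H)^3)
       \<and> (\<forall>\<epsilon>::real. \<epsilon> \<le> 1/15 \<longrightarrow> Cbar H \<epsilon> \<ge> 2 powr (real H - 7))"
proof (intro conjI allI impI ballI)
  have pe: "is_policy pi_e" unfolding is_policy_def pi_e_def ex_actions_def by auto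
  fix \<pi> h x a assume "is_policy \<pi>" "h \<in> {1..H}" "x \<in> ex_states" "a \<in> ex_actions"
  then show "occ_sa H \<pi> h x a / occ_sa H (pi_b H) h x a \<le> 8 * (real H)^3"
    using part1 assms by blast
next
  have pe: "is_policy pi_e" unfolding is_policy_def pi_e_def ex_actions_def by auto
  fix h x a assume "h \<in> {1..H}" "x \<in> ex_states" "a \<in> ex_actions"
  then show "occ_sa H pi_e h x a / occ_sa H (pi_b H) h x a \<le> 8 * (real H)^3"
    using part1[OF pe assms] by blast
next
  fix \<epsilon> :: real assume "\<epsilon> \<le> 1/15"
  then show "Cbar H \<epsilon> \<ge> 2 powr (real H - 7)" using part3 assms by blast
qed

end
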